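(* Let $m>1$ and $a\in\mathbb{Z}_m$ with $2a^2-2a+1\equiv0\pmod m$, and let $(\mathbb{Z}_m,\cdot)$ be the quadratical quasigroup $x\cdot y=ax+(1-a)y\pmod m$. Then there is exactly one $k\in\{1,\dots,m-1\}$ such that $(\mathbb{Z}_m,\cdot)$ is $k$-translatable with respect to the ordering $0,1,\dots,m-1$; this $k$ is the solution of $(a-1)k\equiv a\pmod m$, and it satisfies $1<k<m-1$.
   Context: Every quadratical quasigroup induced by the additive group $\mathbb{Z}_m$ has this form. A finite groupoid with ordering $q_1,\dots,q_n$ is $k$-translatable ($1\le k<n$) with respect to this ordering if $q_i\cdot q_j=q_{i-1}\cdot q_{j-k}$ for all $i\in\{2,\dots,n\}$, $j\in\{1,\dots,n\}$, indices taken modulo $n$ in $\{1,\dots,n\}$. *)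

theory Defs
  imports Main "HOL-Number_Theory.Cong"
begin

definition idx_mod :: "int \<Rightarrow> int \<Rightarrow> int" where
  "idx_mod n t = ((t - 1) mod n) + 1"

definition k_translatable :: "('a \<Rightarrow> 'a \<Rightarrow> 'a) \<Rightarrow> (int \<Rightarrow> 'a) \<Rightarrow> int \<Rightarrow> int \<Rightarrow> bool" where
  "k_translatable opr q n k \<longleftrightarrow> 1 \<le> k \<and> k < n \<and>
     (\<forall>i\<in>{2..n}. \<forall>j\<in>{1..n}.
        opr (q i) (q j) = opr (q (idx_mod n (i - 1))) (q (idx_mod n (j - k))))"

(* The groupoid (Z_m, .) with x . y = a x + (1-a) y mod m, carrier represented as {0..m-1}. *)
definition zm_op :: "int \<Rightarrow> int \<Rightarrow> int \<Rightarrow> int \<Rightarrow> int" where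
  "zm_op m a x y = (a * x + (1 - a) * y) mod m"

definition zm_ord :: "int \<Rightarrow> int" where
  "zm_ord i = i - 1"

end

theory Submission
  imports Defs
begin

lemma char:
  fixes m a k :: int
  assumes "m > 1"
  shows "k_translatable (zm_op m a) zm_ord m k \<longleftrightarrow> 1 \<le> k \<and> k < m \<and> m dvd (a + (1 - a) * k)"
proof -
  have eq: "zm_op m a (zm_ord i) (zm_ord j) = zm_op m a (zm_ord (idx_mod m (i - 1))) (zm_ord (idx_mod m (j - k)))
      \<longleftrightarrow> m dvd (a + (1 - a) * k)" if "i \<in> {2..m}" for i j
  proof -
    have i1: "idx_mod m (i - 1) = i - 1" using that by (simp add: idx_mod_def)
    have i2: "(i - 2) mod m = i - 2" using that by simp
    have "zm_op m a (zm_ord (idx_mod m (i - 1))) (zm_ord (idx_mod m (j - k)))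
        = (a * (i - 2) + (1 - a) * ((j - k - 1) mod m)) mod m"
      by (simp add: zm_op_def zm_ord_def idx_mod_def i1 i2)
    also have "\<dots> = (a * (i - 2) + (1 - a) * (j - k - 1)) mod m"
      by (metis mod_add_right_eq mod_mult_right_eq)
    finally have r: "zm_op m a (zm_ord (idx_mod m (i - 1))) (zm_ord (idx_mod m (j - k)))
        = (a * (i - 2) + (1 - a) * (j - k - 1)) mod m" .
    have l: "zm_op m a (zm_ord i) (zm_ord j) = (a * (i - 1) + (1 - a) * (j - 1)) mod m"
      by (simp add: zm_op_def zm_ord_def)
    have d: "(a * (i - 1) + (1 - a) * (j - 1)) - (a * (i - 2) + (1 - a) * (j - k - 1)) = a + (1 - a) * k"
      by (simp add: algebra_simps)
    show ?thesis unfolding l r mod_eq_dvd_iff d ..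
  qed
  show ?thesis
  proof
    assume h: "k_translatable (zm_op m a) zm_ord m k"
    hence "zm_op m a (zm_ord 2) (zm_ord 1) = zm_op m a (zm_ord (idx_mod m (2 - 1))) (zm_ord (idx_mod m (1 - k)))"
      using assms unfolding k_translatable_def by auto
    with eq[of 2 1] assms h show "1 \<le> k \<and> k < m \<and> m dvd (a + (1 - a) * k)"
      unfolding k_translatable_def by auto
  next
    assume "1 \<le> k \<and> k < m \<and> m dvd (a + (1 - a) * k)"
    thus "k_translatable (zm_op m a) zm_ord m k"
      unfolding k_translatable_def using eq by auto
  qed
qed

theorem theorem9p3:
  fixes m a :: int
  assumes "m > 1" and "0 \<le> a" and "a < m"
    and "[2 * a^2 - 2 * a + 1 = 0] (mod m)"
  shows "(\<exists>!k. k \<in> {1..m-1} \<and> k_translatable (zm_op m a) zm_ord m k) \<and>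
         (\<forall>k\<in>{1..m-1}. k_translatable (zm_op m a) zm_ord m k \<longrightarrow>
            [(a - 1) * k = a] (mod m) \<and> 1 < k \<and> k < m - 1)"
proof -
  have H: "m dvd 2 * a^2 - 2 * a + 1" using assms(4) by (simp add: cong_0_iff)
  have cg: "[(a - 1) * k = a] (mod m) \<longleftrightarrow> m dvd (a + (1 - a) * k)" for k
  proof -
    have "[(a - 1) * k = a] (mod m) \<longleftrightarrow> m dvd ((a - 1) * k - a)" by (simp add: cong_iff_dvd_diff)
    also have "\<dots> \<longleftrightarrow> m dvd -((a - 1) * k - a)" by (rule dvd_minus_iff[symmetric])
    also have "-((a - 1) * k - a) = a + (1 - a) * k" by (simp add: algebra_simps)
    finally show ?thesis .
  qed
  have bounds: "1 < k \<and> k < m - 1" if k: "1 \<le> k" "k < m" "m dvd (a + (1 - a) * k)" for k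
  proof -
    have "k \<noteq> 1"
    proof
      assume "k = 1" with k have "m dvd 1" by simp
      with assms(1) show False by (simp add: zdvd1_eq)
    qed
    moreover have "k \<noteq> m - 1"
    proof
      assume "k = m - 1"
      with k have "m dvd (a + (1 - a) * m - (1 - a))" by (simp add: algebra_simps)
      moreover have "a + (1 - a) * m - (1 - a) = (1 - a) * m + (2 * a - 1)" by (simp add: algebra_simps)
      ultimately have d1: "m dvd 2 * a - 1" by (simp add: dvd_add_right_iff)
      have "2 * a^2 - 2 * a + 1 = a * (2 * a - 1) - (a - 1)" by (simp add: algebra_simps power2_eq_square)
      hence "a - 1 = a * (2 * a - 1) - (2 * a^2 - 2 * a + 1)" by simp
      with H d1 have "m dvd a - 1" by (metis dvd_diff dvd_mult)
      hence "m dvd 2 * (a - 1)" by (rule dvd_mult)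
      with d1 have "m dvd (2 * a - 1) - 2 * (a - 1)" by (rule dvd_diff)
      hence "m dvd 1" by (simp add: algebra_simps)
      with assms(1) show False by (simp add: zdvd1_eq)
    qed
    ultimately show ?thesis using k by auto
  qed
  define k0 where "k0 = (- 2 * a * a) mod m"
  have inv: "m dvd (-2 * a) * (a - 1) - 1"
  proof -
    have "(-2 * a) * (a - 1) - 1 = -(2 * a^2 - 2 * a + 1)" by (simp add: algebra_simps power2_eq_square)
    thus ?thesis using H by (metis dvd_minus_iff)
  qed
  have k0dvd: "m dvd (a + (1 - a) * k0)"
  proof -
    have "m dvd a + (1 - a) * (- 2 * a * a)"
    proof -
      have "a + (1 - a) * (- 2 * a * a) = - a * ((-2 * a) * (a - 1) - 1)" by (simp add: algebra_simps)
      thus ?thesis using inv by simp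
    qed
    moreover have "(a + (1 - a) * k0) mod m = (a + (1 - a) * (- 2 * a * a)) mod m"
      unfolding k0_def by (metis mod_add_right_eq mod_mult_right_eq)
    ultimately show ?thesis by (simp add: mod_eq_0_iff_dvd[symmetric])
  qed
  have k0r: "0 \<le> k0" "k0 < m" using assms(1) unfolding k0_def by auto
  have "k0 \<noteq> 0"
  proof
    assume "k0 = 0" with k0dvd have "m dvd a" by simp
    with H have "m dvd (2 * a^2 - 2 * a + 1) - a * (2 * a - 2)" by (simp add: dvd_diff)
    moreover have "(2 * a^2 - 2 * a + 1) - a * (2 * a - 2) = 1" by (simp add: algebra_simps power2_eq_square)
    ultimately have "m dvd 1" by simp
    with assms(1) show False by (simp add: zdvd1_eq)
  qed
  with k0r have k0r': "1 \<le> k0" "k0 < m" by auto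
  have uniq: "k = k0" if "0 \<le> k" "k < m" "m dvd (a + (1 - a) * k)" for k
  proof -
    have "m dvd (a + (1 - a) * k) - (a + (1 - a) * k0)" using that(3) k0dvd by (rule dvd_diff)
    hence "m dvd (a - 1) * (k0 - k)" by (simp add: algebra_simps)
    hence "m dvd (-2 * a) * ((a - 1) * (k0 - k))" by simp
    moreover have "(-2 * a) * ((a - 1) * (k0 - k)) = ((-2 * a) * (a - 1) - 1) * (k0 - k) + (k0 - k)"
      by (simp add: algebra_simps)
    ultimately have "m dvd (k0 - k)" using inv by (metis dvd_add_right_iff dvd_mult2)
    hence "k0 mod m = k mod m" by (simp add: mod_eq_dvd_iff)
    with that k0r show ?thesis by simp
  qed
  show ?thesis
  proof
    show "\<exists>!k. k \<in> {1..m-1} \<and> k_translatable (zm_op m a) zm_ord m k"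
    proof
      show "k0 \<in> {1..m-1} \<and> k_translatable (zm_op m a) zm_ord m k0"
        using k0r' k0dvd char[OF assms(1)] by auto
    next
      fix k assume "k \<in> {1..m-1} \<and> k_translatable (zm_op m a) zm_ord m k"
      thus "k = k0" using uniq char[OF assms(1)] by auto
    qed
  next
    show "\<forall>k\<in>{1..m-1}. k_translatable (zm_op m a) zm_ord m k \<longrightarrow>
            [(a - 1) * k = a] (mod m) \<and> 1 < k \<and> k < m - 1"
      using char[OF assms(1)] cg bounds by auto
  qed
qed

end
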